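(* Let $\Gamma$ be a countable discrete group and $\mu$ a symmetric, generating probability measure on $\Gamma$. Let $f\in\ell^\infty(\Gamma)$ be real valued with $\|f\|_\infty\le1$ and $f*\mu=-f$, such that $\mathcal P^n_\mu(|f|)$ increases pointwise to $1$ as $n\to\infty$. Then there exists a group homomorphism $\chi:\Gamma\to\{\pm1\}$ with $\chi(h)=-1$ for all $h\in\operatorname{supp}(\mu)$; in particular $\chi*\mu=-\chi$.
   Context: $(f*\mu)(x)=\sum_{h\in\Gamma}\mu(h)f(xh)$, and $\mathcal P^n_\mu(f)(x)=\sum_h\mu^{*n}(h)f(xh)$. $\mu$ symmetric: $\mu(g)=\mu(g^{-1})$; generating: its support generates $\Gamma$ as a group. *)

theory Defs
  imports "HOL-Probability.Probability"
begin

text \<open>The group \<Gamma> is a type of class group_add (written additively: x h becomes x + h,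
  h^-1 becomes - h, identity 0). Probability measures on \<Gamma> are pmfs.\<close>

inductive_set gen_subgroup :: "'g::group_add set \<Rightarrow> 'g set" for S where
  gen_zero: "0 \<in> gen_subgroup S"
| gen_base: "s \<in> S \<Longrightarrow> s \<in> gen_subgroup S"
| gen_add: "a \<in> gen_subgroup S \<Longrightarrow> b \<in> gen_subgroup S \<Longrightarrow> a + b \<in> gen_subgroup S"
| gen_uminus: "a \<in> gen_subgroup S \<Longrightarrow> - a \<in> gen_subgroup S"

definition symmetric_pmf :: "'g::group_add pmf \<Rightarrow> bool" where
  "symmetric_pmf \<mu> \<longleftrightarrow> (\<forall>g. pmf \<mu> g = pmf \<mu> (- g))"

definition generating_pmf :: "'g::group_add pmf \<Rightarrow> bool" where
  "generating_pmf \<mu> \<longleftrightarrow> gen_subgroup (set_pmf \<mu>) = UNIV"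

definition conv_right :: "('g::group_add \<Rightarrow> real) \<Rightarrow> 'g pmf \<Rightarrow> 'g \<Rightarrow> real" where
  "conv_right f \<mu> x = (\<Sum>\<^sub>\<infinity>h. pmf \<mu> h * f (x + h))"

primrec conv_pow :: "'g::group_add pmf \<Rightarrow> nat \<Rightarrow> 'g pmf" where
  "conv_pow \<mu> 0 = return_pmf 0"
| "conv_pow \<mu> (Suc n) = bind_pmf (conv_pow \<mu> n) (\<lambda>a. map_pmf (\<lambda>b. a + b) \<mu>)"

definition markov_pow :: "'g::group_add pmf \<Rightarrow> nat \<Rightarrow> ('g \<Rightarrow> real) \<Rightarrow> 'g \<Rightarrow> real" where
  "markov_pow \<mu> n f x = (\<Sum>\<^sub>\<infinity>h. pmf (conv_pow \<mu> n) h * f (x + h))"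

end

theory Submission
  imports Defs
begin

lemma pmf_summ: "pmf p summable_on UNIV"
proof -
  have "Infinite_Sum.abs_summable_on (pmf p) UNIV"
    using abs_summable_equivalent pmf_abs_summable by blast
  then show ?thesis by simp
qed

lemma pmf_infsum1: "infsum (pmf p) UNIV = 1"
  using infsetsum_infsum[OF pmf_abs_summable, of p UNIV] infsetsum_pmf_eq_1[of p UNIV] by simp

lemma summ_bdd:
  fixes g :: "'a \<Rightarrow> real"
  assumes "\<And>h. \<bar>g h\<bar> \<le> B"
  shows "(\<lambda>h. pmf p h * g h) summable_on UNIV"
proof -
  have "(\<lambda>h. \<bar>pmf p h * g h\<bar>) summable_on UNIV"
  proof (rule summable_on_comparison_test)
    show "(\<lambda>h. B * pmf p h) summable_on UNIV"
      using summable_on_cmult_right[OF pmf_summ] by blast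
    fix h
    show "\<bar>pmf p h * g h\<bar> \<le> B * pmf p h"
      using mult_left_mono[OF assms[of h] pmf_nonneg[of p h]] by (simp add: abs_mult mult.commute)
  qed simp
  then show ?thesis
    using summable_on_iff_abs_summable_on_real by auto
qed

abbreviation T :: "'g::group_add pmf \<Rightarrow> nat \<Rightarrow> ('g \<Rightarrow> real) \<Rightarrow> 'g \<Rightarrow> real" where
  "T p k \<equiv> (\<lambda>g. conv_right g p) ^^ k"

lemma conv_le:
  assumes "\<And>y. \<bar>g y\<bar> \<le> C" "\<And>y. g y \<le> B"
  shows "conv_right g p x \<le> B"
proof -
  have "conv_right g p x \<le> infsum (\<lambda>h. pmf p h * B) UNIV"
    unfolding conv_right_def
    by (rule infsum_mono[OF summ_bdd[OF assms(1)] summ_bdd[of _ "\<bar>B\<bar>"]])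
       (auto intro: mult_left_mono assms(2))
  also have "\<dots> = B" using infsum_cmult_left[of B "pmf p" UNIV] pmf_summ[of p] pmf_infsum1[of p] by simp
  finally show ?thesis .
qed

lemma conv_ge:
  assumes "\<And>y. \<bar>g y\<bar> \<le> C" "\<And>y. B \<le> g y"
  shows "B \<le> conv_right g p x"
proof -
  have "B = infsum (\<lambda>h. pmf p h * B) UNIV"
    using infsum_cmult_left[of B "pmf p" UNIV] pmf_summ[of p] pmf_infsum1[of p] by simp
  also have "\<dots> \<le> conv_right g p x"
    unfolding conv_right_def
    by (rule infsum_mono[OF summ_bdd[of _ "\<bar>B\<bar>"] summ_bdd[OF assms(1)]])
       (auto intro: mult_left_mono assms(2))
  finally show ?thesis .
qed

lemma conv_bdd:
  assumes "\<And>y. \<bar>g y\<bar> \<le> C"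
  shows "\<bar>conv_right g p x\<bar> \<le> C"
proof -
  have "g y \<le> C" "- C \<le> g y" for y using assms[of y] by auto
  then have "conv_right g p x \<le> C" "- C \<le> conv_right g p x"
    by (auto intro!: conv_le[OF assms] conv_ge[OF assms])
  then show ?thesis by auto
qed

lemma T_bdd:
  assumes "\<And>y. \<bar>g y\<bar> \<le> C"
  shows "\<bar>T p k g x\<bar> \<le> C"
proof (induction k arbitrary: x)
  case 0 show ?case using assms by simp
next
  case (Suc k) show ?case using conv_bdd[of "T p k g" C p x] Suc by simp
qed

lemma conv_lin:
  assumes "\<And>y. \<bar>g1 y\<bar> \<le> C1" "\<And>y. \<bar>g2 y\<bar> \<le> C2"
  shows "conv_right (\<lambda>z. g1 z + a * g2 z + c) p x = conv_right g1 p x + a * conv_right g2 p x + c"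
proof -
  have s1: "(\<lambda>h. pmf p h * g1 (x + h)) summable_on UNIV" by (rule summ_bdd[where B=C1]) (rule assms(1))
  have s2: "(\<lambda>h. pmf p h * g2 (x + h)) summable_on UNIV" by (rule summ_bdd[where B=C2]) (rule assms(2))
  have s3: "(\<lambda>h. a * (pmf p h * g2 (x + h))) summable_on UNIV" using summable_on_cmult_right[OF s2] .
  have s4: "(\<lambda>h. pmf p h * c) summable_on UNIV" using summable_on_cmult_left[OF pmf_summ[of p], of c] .
  have "conv_right (\<lambda>z. g1 z + a * g2 z + c) p x
     = infsum (\<lambda>h. (pmf p h * g1 (x + h) + a * (pmf p h * g2 (x + h))) + pmf p h * c) UNIV"
    unfolding conv_right_def by (rule infsum_cong) (simp add: distrib_left mult.left_commute)
  also have "\<dots> = infsum (\<lambda>h. pmf p h * g1 (x + h) + a * (pmf p h * g2 (x + h))) UNIV + infsum (\<lambda>h. pmf p h * c) UNIV"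
    by (rule infsum_add[OF summable_on_add[OF s1 s3] s4])
  also have "\<dots> = conv_right g1 p x + a * conv_right g2 p x + c"
    unfolding conv_right_def
    using infsum_add[OF s1 s3] infsum_cmult_right[of a "\<lambda>h. pmf p h * g2 (x + h)" UNIV] s2
      infsum_cmult_left[of c "pmf p" UNIV] pmf_summ[of p] pmf_infsum1[of p] by simp
  finally show ?thesis .
qed

lemma T_lin:
  assumes "\<And>y. \<bar>g1 y\<bar> \<le> C1" "\<And>y. \<bar>g2 y\<bar> \<le> C2"
  shows "T p k (\<lambda>z. g1 z + a * g2 z + c) x = T p k g1 x + a * T p k g2 x + c"
proof (induction k arbitrary: x)
  case 0 then show ?case by simp
next
  case (Suc k)
  have "T p (Suc k) (\<lambda>z. g1 z + a * g2 z + c) x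
      = conv_right (\<lambda>z. T p k g1 z + a * T p k g2 z + c) p x"
  proof -
    have "T p k (\<lambda>z. g1 z + a * g2 z + c) = (\<lambda>z. T p k g1 z + a * T p k g2 z + c)"
      by (rule ext) (rule Suc.IH)
    then show ?thesis by simp
  qed
  also have "\<dots> = T p (Suc k) g1 x + a * T p (Suc k) g2 x + c"
    using conv_lin[OF T_bdd[OF assms(1)] T_bdd[OF assms(2)]] by simp
  finally show ?case .
qed

lemma T_neg:
  assumes "conv_right f p = (\<lambda>x. - f x)"
  shows "T p k f = (\<lambda>x. (-1)^k * f x)"
proof (induction k)
  case 0 then show ?case by simp
next
  case (Suc k)
  have "T p (Suc k) f = conv_right (\<lambda>x. (-1)^k * f x) p" using Suc by simp
  also have "\<dots> = (\<lambda>x. (-1)^k * conv_right f p x)"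
    unfolding conv_right_def
  proof (rule ext)
    fix x
    have "(\<lambda>h. pmf p h * ((-1)^k * f (x + h))) = (\<lambda>h. (-1)^k * (pmf p h * f (x + h)))"
      by (rule ext) (rule mult.left_commute)
    then show "(\<Sum>\<^sub>\<infinity>h. pmf p h * ((-1)^k * f (x + h))) = (-1)^k * (\<Sum>\<^sub>\<infinity>h. pmf p h * f (x + h))"
      by (simp add: infsum_cmult_right')
  qed
  also have "\<dots> = (\<lambda>x. (-1)^(Suc k) * f x)" using assms by simp
  finally show ?case .
qed

lemma conv_single:
  assumes "\<And>y. \<bar>g y\<bar> \<le> C" "\<And>y. 0 \<le> g y"
  shows "pmf p s * g (x + s) \<le> conv_right g p x"
proof -
  have "infsum (\<lambda>h. pmf p h * g (x + h)) {s} \<le> infsum (\<lambda>h. pmf p h * g (x + h)) UNIV"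
    by (rule infsum_mono_neutral) (auto intro: summ_bdd assms simp: assms(2))
  then show ?thesis unfolding conv_right_def by simp
qed

lemma T_nn:
  assumes "\<And>y. \<bar>g y\<bar> \<le> C" "\<And>y. 0 \<le> g y"
  shows "0 \<le> T p k g x"
proof (induction k arbitrary: x)
  case 0 show ?case using assms by simp
next
  case (Suc k) show ?case using conv_ge[OF T_bdd[OF assms(1)] Suc.IH] by simp
qed

lemma T_le:
  assumes "\<And>y. \<bar>g y\<bar> \<le> C" "\<And>y. g y \<le> B"
  shows "T p k g x \<le> B"
proof (induction k arbitrary: x)
  case 0 show ?case using assms by simp
next
  case (Suc k) show ?case using conv_le[OF T_bdd[OF assms(1)] Suc.IH] by simp
qed

lemma T_word:
  assumes "\<And>y. \<bar>g y\<bar> \<le> C" "\<And>y. 0 \<le> g y"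
  shows "prod_list (map (pmf p) ws) * g (x + sum_list ws) \<le> T p (length ws) g x"
proof (induction ws arbitrary: x)
  case Nil then show ?case by simp
next
  case (Cons s ws)
  have nn: "0 \<le> T p (length ws) g y" for y
    by (rule T_nn[OF assms])
  have "prod_list (map (pmf p) (s # ws)) * g (x + sum_list (s # ws))
      = pmf p s * (prod_list (map (pmf p) ws) * g ((x + s) + sum_list ws))"
    by (simp add: add.assoc)
  also have "\<dots> \<le> pmf p s * T p (length ws) g (x + s)"
    by (rule mult_left_mono[OF Cons pmf_nonneg])
  also have "\<dots> \<le> conv_right (T p (length ws) g) p x"
    by (rule conv_single[OF T_bdd[OF assms(1)] nn])
  finally show ?case by simp
qed

lemma sum_list_neg: "sum_list (rev (map uminus ws)) = - sum_list (ws :: 'g::group_add list)"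
  by (induction ws) (simp_all add: minus_add)

lemma neg_words:
  assumes "symmetric_pmf \<mu>" "set xs \<subseteq> set_pmf \<mu>"
  shows "set (rev (map uminus xs)) \<subseteq> set_pmf \<mu>"
proof
  fix y assume "y \<in> set (rev (map uminus xs))"
  then obtain z where "z \<in> set xs" "y = - z" by auto
  then have "pmf \<mu> z \<noteq> 0" using assms(2) by (auto simp: set_pmf_iff)
  then show "y \<in> set_pmf \<mu>" using assms(1) \<open>y = - z\<close>
    by (auto simp: set_pmf_iff symmetric_pmf_def)
qed

lemma gen_words:
  assumes "symmetric_pmf \<mu>" "g \<in> gen_subgroup (set_pmf \<mu>)"
  shows "\<exists>ws. set ws \<subseteq> set_pmf \<mu> \<and> sum_list ws = g"
  using assms(2)
proof induction
  case gen_zero show ?case by (rule exI[of _ "[]"]) simp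
next
  case (gen_base s) then show ?case by (intro exI[of _ "[s]"]) simp
next
  case (gen_add a b)
  then obtain xs ys where "set xs \<subseteq> set_pmf \<mu>" "sum_list xs = a" "set ys \<subseteq> set_pmf \<mu>" "sum_list ys = b"
    by blast
  then show ?case by (intro exI[of _ "xs @ ys"]) simp
next
  case (gen_uminus a)
  then obtain xs where xs: "set xs \<subseteq> set_pmf \<mu>" "sum_list xs = a" by blast
  have "set (rev (map uminus xs)) \<subseteq> set_pmf \<mu>"
  proof
    fix y assume "y \<in> set (rev (map uminus xs))"
    then obtain z where "z \<in> set xs" "y = - z" by auto
    then have "pmf \<mu> z \<noteq> 0" using xs by (auto simp: set_pmf_iff)
    then show "y \<in> set_pmf \<mu>" using assms(1) \<open>y = - z\<close>
      by (auto simp: set_pmf_iff symmetric_pmf_def)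
  qed
  then show ?case using xs sum_list_neg by blast
qed

theorem theorem4p4:
  fixes \<mu> :: "'g::{group_add, countable} pmf" and f :: "'g \<Rightarrow> real"
  assumes "symmetric_pmf \<mu>" and "generating_pmf \<mu>"
    and "\<forall>x. \<bar>f x\<bar> \<le> 1"
    and "conv_right f \<mu> = (\<lambda>x. - f x)"
    and "\<forall>x. incseq (\<lambda>n. markov_pow \<mu> n (\<lambda>y. \<bar>f y\<bar>) x)"
    and "\<forall>x. (\<lambda>n. markov_pow \<mu> n (\<lambda>y. \<bar>f y\<bar>) x) \<longlonglongrightarrow> 1"
  shows "\<exists>chi :: 'g \<Rightarrow> real. (\<forall>g. chi g \<in> {-1, 1})
           \<and> (\<forall>a b. chi (a + b) = chi a * chi b)
           \<and> (\<forall>h \<in> set_pmf \<mu>. chi h = -1)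
           \<and> conv_right chi \<mu> = (\<lambda>x. - chi x)"
proof -
  define S where "S = set_pmf \<mu>"
  have words: "\<exists>ws. set ws \<subseteq> S \<and> sum_list ws = g" for g
    using gen_words[OF assms(1)] assms(2) unfolding generating_pmf_def S_def by blast
  have noodd: "even (length ws)" if ws: "set ws \<subseteq> S" "sum_list ws = 0" for ws
  proof (rule ccontr)
    assume odd: "odd (length ws)"
    define k where "k = length ws"
    define c where "c = prod_list (map (pmf \<mu>) ws)"
    have cpos: "c > 0" unfolding c_def using ws(1)
      by (induction ws) (auto simp: S_def set_pmf_iff intro!: mult_pos_pos pmf_nonneg
          dest: order.not_eq_order_implies_strict[OF _ pmf_nonneg])
    have fb: "\<bar>f y\<bar> \<le> 1" for y using assms(3) by simp
    have f2b: "\<bar>f y ^ 2\<bar> \<le> 1" for y using fb[of y] by (metis abs_ge_zero abs_power2 power2_abs power_le_one)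
    define Sup2 where "Sup2 = (SUP y. f y ^ 2)"
    have bdd: "bdd_above (range (\<lambda>y. f y ^ 2))" using f2b by (auto intro!: bdd_aboveI[of _ 1])
    have leS: "f y ^ 2 \<le> Sup2" for y unfolding Sup2_def by (rule cSUP_upper[OF UNIV_I bdd])
    have key: "f y ^ 2 * (1 + 4 * c) \<le> Sup2" for y
    proof -
      define G where "G = (\<lambda>z. (f z + f y) ^ 2)"
      have Gb: "\<bar>G z\<bar> \<le> 4" for z
      proof -
        have "\<bar>f z + f y\<bar> \<le> 2" using fb[of z] fb[of y] by simp
        then have "\<bar>f z + f y\<bar>^2 \<le> 2^2" by (rule power_mono) simp
        then show ?thesis unfolding G_def by simp
      qed
      have Gn: "0 \<le> G z" for z unfolding G_def by simp
      have "c * G (y + sum_list ws) \<le> T \<mu> k G y"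
        unfolding c_def k_def by (rule T_word[OF Gb Gn])
      then have 1: "c * (4 * f y ^ 2) \<le> T \<mu> k G y"
        using ws(2) unfolding G_def by (simp add: power2_eq_square algebra_simps)
      have "G = (\<lambda>z. f z ^ 2 + (2 * f y) * f z + f y ^ 2)"
        unfolding G_def by (rule ext) (simp add: power2_eq_square algebra_simps)
      then have "T \<mu> k G y = T \<mu> k (\<lambda>z. f z ^ 2) y + (2 * f y) * T \<mu> k f y + f y ^ 2"
        using T_lin[OF f2b fb] by simp
      also have "T \<mu> k f y = - f y" using T_neg[OF assms(4), of k] odd unfolding k_def by simp
      also have "T \<mu> k (\<lambda>z. f z ^ 2) y \<le> Sup2"
        by (rule T_le[OF f2b leS])
      finally show ?thesis using 1 by (simp add: algebra_simps power2_eq_square)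
    qed
    have S0: "0 \<le> Sup2" using leS[of 0] by (metis zero_le_power2 order_trans)
    have "(SUP y. f y ^ 2) \<le> Sup2 / (1 + 4 * c)"
      by (rule cSUP_least) (use key cpos in \<open>auto simp: pos_le_divide_eq\<close>)
    then have "Sup2 * (1 + 4 * c) \<le> Sup2" unfolding Sup2_def[symmetric]
      using cpos by (simp add: pos_le_divide_eq)
    then have "Sup2 \<le> 0" using cpos S0 by (simp add: algebra_simps) (smt (verit) mult_pos_pos)
    then have f0: "f y = 0" for y using leS[of y] by (smt (verit) power2_less_eq_zero_iff)
    have "markov_pow \<mu> n (\<lambda>y. \<bar>f y\<bar>) 0 = 0" for n
      unfolding markov_pow_def by (simp add: f0)
    moreover have "(\<lambda>n. markov_pow \<mu> n (\<lambda>y. \<bar>f y\<bar>) 0) \<longlonglongrightarrow> 1" using assms(6) by blast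
    ultimately show False using LIMSEQ_const_iff[of "0::real" 1] by simp
  qed
  have par: "even (length xs) = even (length ys)"
    if xs: "set xs \<subseteq> S" and ys: "set ys \<subseteq> S" and e: "sum_list xs = sum_list ys" for xs ys
  proof -
    have "set (xs @ rev (map uminus ys)) \<subseteq> S"
      using xs neg_words[OF assms(1) ys[unfolded S_def]] unfolding S_def by simp
    moreover have "sum_list (xs @ rev (map uminus ys)) = 0" using e by (simp add: sum_list_neg)
    ultimately have "even (length (xs @ rev (map uminus ys)))" by (rule noodd)
    then show ?thesis by simp
  qed
  define chi :: "'g \<Rightarrow> real" where
    "chi g = (if even (length (SOME ws. set ws \<subseteq> S \<and> sum_list ws = g)) then 1 else -1)" for g
  have chi_eq: "chi (sum_list ws) = (-1) ^ length ws" if ws: "set ws \<subseteq> S" for ws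
  proof -
    define w where "w = (SOME v. set v \<subseteq> S \<and> sum_list v = sum_list ws)"
    have "set w \<subseteq> S \<and> sum_list w = sum_list ws"
      unfolding w_def by (rule someI_ex) (use ws in blast)
    then have "even (length w) = even (length ws)" using par ws by blast
    then show ?thesis unfolding chi_def w_def[symmetric] by simp
  qed
  have chi_pm: "chi g \<in> {-1, 1}" for g unfolding chi_def by simp
  have hom: "chi (a + b) = chi a * chi b" for a b
  proof -
    obtain xs ys where xs: "set xs \<subseteq> S" "sum_list xs = a" and ys: "set ys \<subseteq> S" "sum_list ys = b"
      using words by meson
    have "chi (a + b) = chi (sum_list (xs @ ys))" using xs ys by simp
    also have "\<dots> = (-1) ^ (length xs + length ys)" using chi_eq[of "xs @ ys"] xs ys by simp
    also have "\<dots> = chi a * chi b" using chi_eq[OF xs(1)] chi_eq[OF ys(1)] xs ys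
      by (simp add: power_add)
    finally show ?thesis .
  qed
  have supp: "chi h = -1" if "h \<in> set_pmf \<mu>" for h
    using chi_eq[of "[h]"] that unfolding S_def by simp
  have conv: "conv_right chi \<mu> = (\<lambda>x. - chi x)"
  proof (rule ext)
    fix x
    have "conv_right chi \<mu> x = (\<Sum>\<^sub>\<infinity>h. pmf \<mu> h * (- chi x))"
      unfolding conv_right_def
    proof (rule infsum_cong)
      fix h
      show "pmf \<mu> h * chi (x + h) = pmf \<mu> h * (- chi x)"
        by (cases "h \<in> set_pmf \<mu>") (auto simp: hom supp set_pmf_iff)
    qed
    also have "\<dots> = - chi x"
      using infsum_cmult_left[of "- chi x" "pmf \<mu>" UNIV] pmf_summ[of \<mu>] pmf_infsum1[of \<mu>] by simp
    finally show "conv_right chi \<mu> x = - chi x" .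
  qed
  show ?thesis using chi_pm hom supp conv by blast
qed

end
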